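(* Let $X\in\mathbb{R}^{n\times m}$ be a random matrix with independent centered entries that are sub-Poisson with variance proxy $\sigma^2$, and let $A\in\mathbb{R}^{n\times m}$ be deterministic with $|A_{ij}|\le\sigma^2$ for all $i,j$. Then for all $t\ge1$, $$\Pr\Big(\|AX^\top\|_F\ge34(1+t)\,n\sigma^2\big(\sqrt{m\sigma^2}\vee\tfrac23\big)\Big)\le\frac{n}{(en)^t}.$$
   Context: A real random variable $Y$ is sub-Poisson with variance proxy $\sigma^2\ge0$ if $\mathbb{E}e^{\lambda(Y-\mathbb{E}Y)}\le\exp\{\sigma^2(e^{|\lambda|}-1-|\lambda|)\}$ for all $\lambda\in\mathbb{R}$. $\|\cdot\|_F$ is the Frobenius norm, $\vee=\max$. *)

theory Defs
  imports "HOL-Probability.Probability"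
begin

definition sub_poisson :: "'a measure \<Rightarrow> ('a \<Rightarrow> real) \<Rightarrow> real \<Rightarrow> bool" where
  "sub_poisson M Y s2 \<longleftrightarrow> s2 \<ge> 0 \<and> Y \<in> borel_measurable M \<and> integrable M Y \<and>
     (\<forall>l::real. integrable M (\<lambda>x. exp (l * (Y x - integral\<^sup>L M Y))) \<and>
        integral\<^sup>L M (\<lambda>x. exp (l * (Y x - integral\<^sup>L M Y)))
          \<le> exp (s2 * (exp \<bar>l\<bar> - 1 - \<bar>l\<bar>)))"

text \<open>Frobenius norm of the n x n matrix A X^T, where A, X are n x m matrices
  given as functions on indices i < n, j < m: (A X^T)_{ik} = sum_j A_ij X_kj.\<close>
definition frob_ABt :: "nat \<Rightarrow> nat \<Rightarrow> (nat \<Rightarrow> nat \<Rightarrow> real) \<Rightarrow> (nat \<Rightarrow> nat \<Rightarrow> real) \<Rightarrow> real" where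
  "frob_ABt n m A B = sqrt (\<Sum>i<n. \<Sum>k<n. (\<Sum>j<m. A i j * B k j)\<^sup>2)"

end

theory Submission
  imports Defs
begin


lemma phi_mono:
  fixes a b :: real assumes "0 \<le> a" "a \<le> b"
  shows "exp a - 1 - a \<le> exp b - 1 - b"
proof -
  have "exp b = exp a * exp (b - a)" by (simp add: exp_diff)
  also have "\<dots> \<ge> exp a * (1 + (b - a))"
    by (intro mult_left_mono) auto
  finally have "exp b \<ge> exp a + exp a * (b - a)" by (simp add: algebra_simps)
  moreover have "exp a * (b - a) \<ge> 1 * (b - a)"
    using assms by (intro mult_right_mono) auto
  ultimately show ?thesis by simp
qed

lemma phi_le_sq:
  fixes x :: real assumes "0 \<le> x"
  shows "exp x - 1 - x \<le> x\<^sup>2 * exp x / 2"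
proof -
  let ?h = "\<lambda>y::real. y\<^sup>2 / 2 - 1 + exp (-y) * (1 + y)"
  have "?h 0 \<le> ?h x"
  proof (rule DERIV_nonneg_imp_nondecreasing[OF assms])
    fix y :: real assume y: "0 \<le> y" "y \<le> x"
    have "DERIV ?h y :> (y - y * exp (-y))"
      by (auto intro!: derivative_eq_intros simp: algebra_simps power2_eq_square)
    moreover have "y - y * exp (-y) \<ge> 0"
    proof -
      have "y * exp (-y) \<le> y * 1" using y by (intro mult_left_mono) auto
      thus ?thesis by simp
    qed
    ultimately show "\<exists>d. DERIV ?h y :> d \<and> d \<ge> 0" by blast
  qed
  hence "0 \<le> x\<^sup>2 / 2 - 1 + exp (-x) * (1 + x)" by simp
  hence "0 \<le> exp x * (x\<^sup>2 / 2 - 1 + exp (-x) * (1 + x))" by simp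
  also have "exp x * (x\<^sup>2 / 2 - 1 + exp (-x) * (1 + x)) = x\<^sup>2 * exp x / 2 - exp x + (1 + x)"
    by (simp add: algebra_simps exp_minus)
  finally show ?thesis by simp
qed

lemma sinh_ge:
  fixes y :: real assumes "0 \<le> y" shows "exp y - exp (-y) \<ge> 2 * y"
proof -
  let ?g = "\<lambda>y::real. exp y - exp (-y) - 2 * y"
  have "?g 0 \<le> ?g y"
  proof (rule DERIV_nonneg_imp_nondecreasing[OF assms])
    fix z :: real assume z: "0 \<le> z" "z \<le> y"
    have "DERIV ?g z :> (exp z + exp (-z) - 2)"
      by (auto intro!: derivative_eq_intros)
    moreover have "exp z + exp (-z) - 2 \<ge> 0"
    proof -
      have "exp z + inverse (exp z) \<ge> 2" by (rule plus_inverse_ge_2) auto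
      thus ?thesis by (simp add: exp_minus)
    qed
    ultimately show "\<exists>d. DERIV ?g z :> d \<and> d \<ge> 0" by blast
  qed
  thus ?thesis by simp
qed

lemma cosh_ge_sq:
  fixes u :: real shows "(exp u + exp (-u)) / 2 \<ge> 1 + u\<^sup>2 / 2"
proof -
  define y where "y = \<bar>u\<bar>"
  have y: "0 \<le> y" by (simp add: y_def)
  have eq: "exp u + exp (-u) = exp y + exp (-y)" "u\<^sup>2 = y\<^sup>2"
    by (auto simp: y_def abs_if)
  let ?f = "\<lambda>y::real. exp y + exp (-y) - 2 - y\<^sup>2"
  have "?f 0 \<le> ?f y"
  proof (rule DERIV_nonneg_imp_nondecreasing[OF y])
    fix z :: real assume z: "0 \<le> z" "z \<le> y"
    have "DERIV ?f z :> (exp z - exp (-z) - 2 * z)"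
      by (auto intro!: derivative_eq_intros simp: power2_eq_square)
    moreover have "exp z - exp (-z) - 2 * z \<ge> 0" using sinh_ge[OF z(1)] by simp
    ultimately show "\<exists>d. DERIV ?f z :> d \<and> d \<ge> 0" by blast
  qed
  thus ?thesis using eq by simp
qed

lemma exp_02_pow: "exp (4/5::real) \<ge> 2"
proof -
  have "exp (1/5::real) \<ge> 1 + 1/5" by (rule exp_ge_add_one_self)
  hence "exp (1/5::real) ^ 4 \<ge> (6/5) ^ 4" by (intro power_mono) auto
  moreover have "exp (1/5::real) ^ 4 = exp (4/5)" by (simp add: exp_of_nat_mult[symmetric])
  moreover have "(6/5::real)^4 = 1296/625" by (simp add: power_numeral_reduce)
  ultimately show ?thesis by simp
qed

lemma cosh_lower:
  fixes u U :: real assumes "\<bar>u\<bar> \<le> U" "2 \<le> U"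
  shows "exp (u\<^sup>2 / (2 * U)) \<le> (exp u + exp (-u)) / 2"
proof (cases "\<bar>u\<bar> \<ge> 8/5")
  case True
  have "u\<^sup>2 / (2 * U) \<le> \<bar>u\<bar> / 2"
  proof -
    have "u\<^sup>2 = \<bar>u\<bar> * \<bar>u\<bar>" by (simp add: power2_eq_square)
    also have "\<dots> \<le> \<bar>u\<bar> * U" using assms by (intro mult_left_mono) auto
    finally show ?thesis using assms by (simp add: field_simps)
  qed
  hence "exp (u\<^sup>2 / (2 * U)) \<le> exp (\<bar>u\<bar> / 2)" by simp
  also have "\<dots> * 2 \<le> exp (\<bar>u\<bar> / 2) * exp (\<bar>u\<bar> / 2)"
  proof -
    have "exp (4/5::real) \<le> exp (\<bar>u\<bar>/2)" using True by simp
    hence "2 \<le> exp (\<bar>u\<bar>/2)" using exp_02_pow by linarith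
    thus ?thesis by (intro mult_left_mono) auto
  qed
  also have "\<dots> = exp \<bar>u\<bar>" by (simp add: exp_add[symmetric])
  also have "\<dots> \<le> exp u + exp (-u)" by (auto simp: abs_if)
  finally show ?thesis by simp
next
  case False
  define x where "x = u\<^sup>2 / (2 * U)"
  have x0: "0 \<le> x" using assms by (simp add: x_def)
  have "x \<le> u\<^sup>2 / 4" unfolding x_def using assms by (intro divide_left_mono) auto
  moreover have "u\<^sup>2 \<le> (8/5)\<^sup>2" using False power_mono[of "\<bar>u\<bar>" "8/5" 2] by simp
  ultimately have x1: "x \<le> 16/25" by (simp add: power2_eq_square)
  have "exp x \<le> 1 + x + x\<^sup>2" using exp_bound[OF x0] x1 by simp
  also have "\<dots> \<le> 1 + 2 * x" using x0 x1 by (simp add: power2_eq_square mult_right_le_one_le)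
  also have "\<dots> \<le> 1 + u\<^sup>2 / 2" using \<open>x \<le> u\<^sup>2 / 4\<close> by simp
  also have "\<dots> \<le> (exp u + exp (-u)) / 2" by (rule cosh_ge_sq)
  finally show ?thesis unfolding x_def .
qed



lemma mgf_prod:
  fixes M :: "'a measure" and X :: "nat \<Rightarrow> nat \<Rightarrow> 'a \<Rightarrow> real"
  assumes P: "prob_space M"
    and ind: "prob_space.indep_vars M (\<lambda>_. borel) (\<lambda>(i, j). X i j) ({..<n} \<times> {..<m})"
    and sp: "\<And>i j. i < n \<Longrightarrow> j < m \<Longrightarrow> sub_poisson M (X i j) s2"
    and ez: "\<And>i j. i < n \<Longrightarrow> j < m \<Longrightarrow> prob_space.expectation M (X i j) = 0"
    and K: "K \<subseteq> {..<n}"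
    and c: "\<And>k j. k \<in> K \<Longrightarrow> j < m \<Longrightarrow> \<bar>c k j\<bar> \<le> a"
  shows "integrable M (\<lambda>\<omega>. \<Prod>k\<in>K. exp (\<Sum>j<m. c k j * X k j \<omega>))"
    and "(\<integral>\<omega>. (\<Prod>k\<in>K. exp (\<Sum>j<m. c k j * X k j \<omega>)) \<partial>M) \<le> exp (s2 * (exp a - 1 - a)) ^ (card K * m)"
proof -
  interpret prob_space M by (rule P)
  define Q where "Q = K \<times> {..<m}"
  define Y where "Y = (\<lambda>p \<omega>. exp (c (fst p) (snd p) * X (fst p) (snd p) \<omega>))"
  have finK: "finite K" using K finite_subset by blast
  have finQ: "finite Q" unfolding Q_def using finK by auto
  have eq: "(\<Prod>k\<in>K. exp (\<Sum>j<m. c k j * X k j \<omega>)) = (\<Prod>p\<in>Q. Y p \<omega>)" for \<omega>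
    by (simp add: exp_sum prod.cartesian_product Q_def Y_def split_beta)
  have QI: "Q \<subseteq> {..<n} \<times> {..<m}" using K unfolding Q_def by auto
  have ind2: "indep_vars (\<lambda>_. borel) (\<lambda>p x. (\<lambda>y. exp (c (fst p) (snd p) * y)) ((\<lambda>(i, j). X i j) p x)) Q"
    by (rule indep_vars_compose2[OF indep_vars_subset[OF ind QI]]) auto
  have indY: "indep_vars (\<lambda>_. borel) Y Q"
  proof -
    have "Y = (\<lambda>p x. exp (c (fst p) (snd p) * X (fst p) (snd p) x))" by (intro ext) (simp add: Y_def)
    thus ?thesis using ind2 by (simp add: split_beta)
  qed
  have intY: "integrable M (Y p)" and boundY: "(\<integral>\<omega>. Y p \<omega> \<partial>M) \<le> exp (s2 * (exp a - 1 - a))"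
    if pQ: "p \<in> Q" for p
  proof -
    obtain k j where p: "p = (k, j)" and kj: "k < n" "j < m" "k \<in> K" using pQ K unfolding Q_def by (cases p) auto
    have spk: "sub_poisson M (X k j) s2" using sp kj by auto
    have e0: "integral\<^sup>L M (X k j) = 0" using ez kj by simp
    from spk[unfolded sub_poisson_def] have
      s0: "s2 \<ge> 0" and
      I: "integrable M (\<lambda>x. exp (c k j * (X k j x - integral\<^sup>L M (X k j))))" and
      B: "integral\<^sup>L M (\<lambda>x. exp (c k j * (X k j x - integral\<^sup>L M (X k j))))
          \<le> exp (s2 * (exp \<bar>c k j\<bar> - 1 - \<bar>c k j\<bar>))" by auto
    show "integrable M (Y p)" using I by (simp add: p Y_def e0)
    have h: "exp (s2 * (exp \<bar>c k j\<bar> - 1 - \<bar>c k j\<bar>)) \<le> exp (s2 * (exp a - 1 - a))"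
      using phi_mono[of "\<bar>c k j\<bar>" a] c[OF kj(3) kj(2)] s0 by (simp add: mult_left_mono)
    have B': "(\<integral>\<omega>. Y p \<omega> \<partial>M) \<le> exp (s2 * (exp \<bar>c k j\<bar> - 1 - \<bar>c k j\<bar>))"
      using B by (simp add: p Y_def e0)
    show "(\<integral>\<omega>. Y p \<omega> \<partial>M) \<le> exp (s2 * (exp a - 1 - a))"
      using order_trans[OF B' h] .
  qed
  show "integrable M (\<lambda>\<omega>. \<Prod>k\<in>K. exp (\<Sum>j<m. c k j * X k j \<omega>))"
    unfolding eq by (rule indep_vars_integrable[OF finQ indY intY])
  have "(\<integral>\<omega>. (\<Prod>k\<in>K. exp (\<Sum>j<m. c k j * X k j \<omega>)) \<partial>M) = (\<Prod>p\<in>Q. \<integral>\<omega>. Y p \<omega> \<partial>M)"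
    unfolding eq by (rule indep_vars_lebesgue_integral[OF finQ indY intY])
  also have "\<dots> \<le> (\<Prod>p\<in>Q. exp (s2 * (exp a - 1 - a)))"
    by (intro prod_mono conjI integral_nonneg_AE boundY) (auto simp: Y_def)
  also have "\<dots> = exp (s2 * (exp a - 1 - a)) ^ (card K * m)"
    by (simp add: Q_def card_cartesian_product)
  finally show "(\<integral>\<omega>. (\<Prod>k\<in>K. exp (\<Sum>j<m. c k j * X k j \<omega>)) \<partial>M) \<le> exp (s2 * (exp a - 1 - a)) ^ (card K * m)" .
qed



lemma cosh_prod_expand:
  fixes f :: "nat \<Rightarrow> real"
  assumes "finite K"
  shows "(\<Prod>k\<in>K. (exp (f k) + exp (- f k)) / 2)
       = (\<Sum>S\<in>Pow K. \<Prod>k\<in>K. exp (if k \<in> S then f k else - f k)) / 2 ^ card K"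
proof -
  have "(\<Prod>k\<in>K. (exp (f k) + exp (- f k)) / 2) = (\<Prod>k\<in>K. exp (f k) + exp (- f k)) / 2 ^ card K"
    by (simp add: prod_dividef)
  also have "(\<Prod>k\<in>K. exp (f k) + exp (- f k)) = (\<Sum>S\<in>Pow K. (\<Prod>k\<in>S. exp (f k)) * (\<Prod>k\<in>K - S. exp (- f k)))"
    by (rule prod_add[OF assms])
  also have "\<dots> = (\<Sum>S\<in>Pow K. \<Prod>k\<in>K. exp (if k \<in> S then f k else - f k))"
  proof (intro sum.cong refl)
    fix S assume "S \<in> Pow K"
    hence SK: "S \<subseteq> K" by auto
    have "(\<Prod>k\<in>K. exp (if k \<in> S then f k else - f k)) = (\<Prod>k\<in>K. if k \<in> S then exp (f k) else exp (- f k))"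
      by (intro prod.cong) auto
    also have "\<dots> = (\<Prod>k\<in>K \<inter> {x. x \<in> S}. exp (f k)) * (\<Prod>k\<in>K \<inter> - {x. x \<in> S}. exp (- f k))"
      by (rule prod.If_cases[OF assms])
    also have "K \<inter> {x. x \<in> S} = S" using SK by auto
    also have "K \<inter> - {x. x \<in> S} = K - S" by auto
    finally show "(\<Prod>k\<in>S. exp (f k)) * (\<Prod>k\<in>K - S. exp (- f k)) = (\<Prod>k\<in>K. exp (if k \<in> S then f k else - f k))" by simp
  qed
  finally show ?thesis .
qed

lemma cosh_prod:
  fixes M :: "'a measure" and X :: "nat \<Rightarrow> nat \<Rightarrow> 'a \<Rightarrow> real"
  assumes P: "prob_space M"
    and ind: "prob_space.indep_vars M (\<lambda>_. borel) (\<lambda>(i, j). X i j) ({..<n} \<times> {..<m})"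
    and sp: "\<And>i j. i < n \<Longrightarrow> j < m \<Longrightarrow> sub_poisson M (X i j) s2"
    and ez: "\<And>i j. i < n \<Longrightarrow> j < m \<Longrightarrow> prob_space.expectation M (X i j) = 0"
    and K: "K \<subseteq> {..<n}"
    and b: "\<And>j. j < m \<Longrightarrow> \<bar>b j\<bar> \<le> 1"
    and th: "0 \<le> \<theta>"
  shows "integrable M (\<lambda>\<omega>. \<Prod>k\<in>K. (exp (\<theta> * (\<Sum>j<m. b j * X k j \<omega>)) + exp (- (\<theta> * (\<Sum>j<m. b j * X k j \<omega>)))) / 2)"
    and "(\<integral>\<omega>. (\<Prod>k\<in>K. (exp (\<theta> * (\<Sum>j<m. b j * X k j \<omega>)) + exp (- (\<theta> * (\<Sum>j<m. b j * X k j \<omega>)))) / 2) \<partial>M)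
          \<le> exp (s2 * (exp \<theta> - 1 - \<theta>)) ^ (card K * m)"
proof -
  interpret prob_space M by (rule P)
  have finK: "finite K" using K finite_subset by blast
  define F where "F = (\<lambda>S \<omega>. \<Prod>k\<in>K. exp (\<Sum>j<m. ((if k \<in> S then \<theta> else - \<theta>) * b j) * X k j \<omega>))"
  have eq: "(\<Prod>k\<in>K. (exp (\<theta> * (\<Sum>j<m. b j * X k j \<omega>)) + exp (- (\<theta> * (\<Sum>j<m. b j * X k j \<omega>)))) / 2)
      = (\<Sum>S\<in>Pow K. F S \<omega>) / 2 ^ card K" for \<omega>
  proof -
    have "(\<Prod>k\<in>K. (exp (\<theta> * (\<Sum>j<m. b j * X k j \<omega>)) + exp (- (\<theta> * (\<Sum>j<m. b j * X k j \<omega>)))) / 2)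
      = (\<Sum>S\<in>Pow K. \<Prod>k\<in>K. exp (if k \<in> S then \<theta> * (\<Sum>j<m. b j * X k j \<omega>) else - (\<theta> * (\<Sum>j<m. b j * X k j \<omega>)))) / 2 ^ card K"
      by (rule cosh_prod_expand[OF finK])
    also have "(\<Sum>S\<in>Pow K. \<Prod>k\<in>K. exp (if k \<in> S then \<theta> * (\<Sum>j<m. b j * X k j \<omega>) else - (\<theta> * (\<Sum>j<m. b j * X k j \<omega>))))
       = (\<Sum>S\<in>Pow K. F S \<omega>)"
      unfolding F_def
      by (intro sum.cong prod.cong refl arg_cong[where f=exp]) (auto simp: sum_distrib_left sum_negf algebra_simps)
    finally show ?thesis .
  qed
  have cb: "\<And>k j. k \<in> K \<Longrightarrow> j < m \<Longrightarrow> \<bar>(if k \<in> S then \<theta> else - \<theta>) * b j\<bar> \<le> \<theta>" for S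
  proof -
    fix k j assume "k \<in> K" "j < m"
    have "\<bar>(if k \<in> S then \<theta> else - \<theta>) * b j\<bar> = \<theta> * \<bar>b j\<bar>" using th by (simp add: abs_mult)
    also have "\<dots> \<le> \<theta> * 1" using b[OF \<open>j < m\<close>] th by (intro mult_left_mono) auto
    finally show "\<bar>(if k \<in> S then \<theta> else - \<theta>) * b j\<bar> \<le> \<theta>" by simp
  qed
  have intF: "integrable M (F S)" for S
    unfolding F_def by (rule mgf_prod(1)[OF P ind sp ez K cb]) auto
  have bF: "(\<integral>\<omega>. F S \<omega> \<partial>M) \<le> exp (s2 * (exp \<theta> - 1 - \<theta>)) ^ (card K * m)" for S
    unfolding F_def by (rule mgf_prod(2)[OF P ind sp ez K cb]) auto
  show "integrable M (\<lambda>\<omega>. \<Prod>k\<in>K. (exp (\<theta> * (\<Sum>j<m. b j * X k j \<omega>)) + exp (- (\<theta> * (\<Sum>j<m. b j * X k j \<omega>)))) / 2)"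
    unfolding eq using intF by auto
  have "(\<integral>\<omega>. (\<Prod>k\<in>K. (exp (\<theta> * (\<Sum>j<m. b j * X k j \<omega>)) + exp (- (\<theta> * (\<Sum>j<m. b j * X k j \<omega>)))) / 2) \<partial>M)
      = (\<Sum>S\<in>Pow K. \<integral>\<omega>. F S \<omega> \<partial>M) / 2 ^ card K"
    unfolding eq by (simp add: integral_sum intF)
  also have "\<dots> \<le> (\<Sum>S\<in>Pow K. exp (s2 * (exp \<theta> - 1 - \<theta>)) ^ (card K * m)) / 2 ^ card K"
    by (intro divide_right_mono sum_mono bF) auto
  also have "\<dots> = exp (s2 * (exp \<theta> - 1 - \<theta>)) ^ (card K * m)"
    using finK by (simp add: card_Pow)
  finally show "(\<integral>\<omega>. (\<Prod>k\<in>K. (exp (\<theta> * (\<Sum>j<m. b j * X k j \<omega>)) + exp (- (\<theta> * (\<Sum>j<m. b j * X k j \<omega>)))) / 2) \<partial>M)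
          \<le> exp (s2 * (exp \<theta> - 1 - \<theta>)) ^ (card K * m)" .
qed



lemma num_bounds:
  fixes n :: nat assumes "1 \<le> n"
  shows "1 + ln (real n) \<le> real n" and "1 + ln (real n) + 2 \<le> 34 * sqrt (real n / (1 + ln (real n)))"
proof -
  have n0: "0 < real n" using assms by simp
  show "1 + ln (real n) \<le> real n" using ln_le_minus_one[OF n0] by simp
  define r where "r = sqrt (sqrt (real n))"
  have r1: "1 \<le> r" using assms by (simp add: r_def)
  have rn: "r ^ 4 = real n"
  proof -
    have "r ^ 4 = (r\<^sup>2)\<^sup>2" by (simp add: power_mult[symmetric])
    also have "r\<^sup>2 = sqrt (real n)" unfolding r_def by simp
    also have "(sqrt (real n))\<^sup>2 = real n" by simp
    finally show ?thesis .
  qed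
  have "ln (real n) = 4 * ln r" using rn r1 by (metis ln_realpow less_le_trans zero_less_one of_nat_numeral)
  also have "\<dots> \<le> 4 * (r - 1)" using ln_le_minus_one[of r] r1 by simp
  finally have lr: "ln (real n) \<le> 4 * (r - 1)" .
  define l where "l = 1 + ln (real n)"
  have l1: "1 \<le> l" using assms by (simp add: l_def)
  have l4: "l \<le> 4 * r" using lr by (simp add: l_def)
  have "l * (l + 2)\<^sup>2 \<le> (4 * r) * (4 * r + 2)\<^sup>2"
    using l1 l4 by (intro mult_mono power_mono) auto
  also have "\<dots> \<le> (4 * r) * (6 * r)\<^sup>2" using r1 by (intro mult_left_mono power_mono) auto
  also have "\<dots> = 144 * r ^ 3" by (simp add: power2_eq_square power3_eq_cube)
  also have "\<dots> \<le> 144 * r ^ 4" using r1 by (simp add: power_increasing)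
  also have "\<dots> \<le> 1156 * real n" using rn by simp
  finally have "(l + 2)\<^sup>2 \<le> 34\<^sup>2 * (real n / l)" using l1 by (simp add: field_simps)
  hence "sqrt ((l + 2)\<^sup>2) \<le> sqrt (34\<^sup>2 * (real n / l))" by (rule real_sqrt_le_mono)
  also have "sqrt (34\<^sup>2 * (real n / l)) = 34 * sqrt (real n / l)" by (simp only: real_sqrt_mult) simp
  finally have "l + 2 \<le> 34 * sqrt (real n / l)" using l1 by simp
  thus "1 + ln (real n) + 2 \<le> 34 * sqrt (real n / (1 + ln (real n)))" by (simp add: l_def)
qed



lemma exp32: "exp (3/2::real) \<le> 6"
proof -
  have "exp (3/4::real) \<le> 1 + 3/4 + (3/4)\<^sup>2" by (rule exp_bound) auto
  hence "exp (3/4::real) ^ 2 \<le> (1 + 3/4 + (3/4)\<^sup>2) ^ 2" by (intro power_mono) auto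
  moreover have "exp (3/4::real) ^ 2 = exp (3/2)" by (simp add: exp_of_nat_mult[symmetric])
  ultimately show ?thesis by (simp add: power2_eq_square)
qed

theorem lemmaC1:
  fixes M :: "'a measure" and X :: "nat \<Rightarrow> nat \<Rightarrow> 'a \<Rightarrow> real"
    and A :: "nat \<Rightarrow> nat \<Rightarrow> real" and n m :: nat and \<sigma> t :: real
  assumes "prob_space M"
    and "n \<ge> 1" and "m \<ge> 1" and "\<sigma> > 0"
    and "prob_space.indep_vars M (\<lambda>_. borel) (\<lambda>(i, j). X i j) ({..<n} \<times> {..<m})"
    and "\<And>i j. i < n \<Longrightarrow> j < m \<Longrightarrow> sub_poisson M (X i j) (\<sigma>\<^sup>2)"
    and "\<And>i j. i < n \<Longrightarrow> j < m \<Longrightarrow> prob_space.expectation M (X i j) = 0"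
    and "\<And>i j. i < n \<Longrightarrow> j < m \<Longrightarrow> \<bar>A i j\<bar> \<le> \<sigma>\<^sup>2"
    and "t \<ge> 1"
  shows "measure M {\<omega> \<in> space M.
           frob_ABt n m A (\<lambda>k j. X k j \<omega>)
             \<ge> 34 * (1 + t) * real n * \<sigma>\<^sup>2 * max (sqrt (real m * \<sigma>\<^sup>2)) (2/3)}
         \<le> real n / (exp 1 * real n) powr t"
proof -
  note P = assms(1) and ind = assms(5) and sp = assms(6) and ez = assms(7)
  interpret prob_space M by (rule P)
  define s where "s = \<sigma>\<^sup>2"
  have s0: "0 < s" using assms(4) by (simp add: s_def)
  define Mx where "Mx = max (sqrt (real m * s)) (2/3)"
  have Mx23: "2/3 \<le> Mx" by (simp add: Mx_def)
  have Mx0: "0 < Mx" using Mx23 by simp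
  have msM: "real m * s \<le> Mx\<^sup>2"
  proof -
    have "sqrt (real m * s) \<le> Mx" by (simp add: Mx_def)
    moreover have "0 \<le> real m * s" using s0 by simp
    ultimately have "(sqrt (real m * s))\<^sup>2 \<le> Mx\<^sup>2" by (intro power_mono) auto
    thus ?thesis using s0 by simp
  qed
  define c where "c = 34 * (1 + t)"
  have c68: "68 \<le> c" using assms(9) by (simp add: c_def)
  define l where "l = 1 + ln (real n)"
  have l1: "1 \<le> l" using assms(2) by (simp add: l_def)
  have ln: "l \<le> real n" using num_bounds(1)[OF assms(2)] by (simp add: l_def)
  have lb: "l + 2 \<le> 34 * sqrt (real n / l)" using num_bounds(2)[OF assms(2)] by (simp add: l_def)
  have n0: "0 < real n" using assms(2) by simp
  define N where "N = c\<^sup>2 * real n * Mx\<^sup>2"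
  define R where "R = N / l"
  define th where "th = sqrt (l / real n) / Mx"
  define b where "b = (\<lambda>i j. A i j / s)"
  define W where "W = (\<lambda>i k \<omega>. \<Sum>j<m. b i j * X k j \<omega>)"
  define ch where "ch = (\<lambda>x::real. (exp x + exp (- x)) / 2)"
  have ch_pos: "0 < ch x" for x by (simp add: ch_def add_pos_pos)
  have ch_abs: "exp \<bar>x\<bar> / 2 \<le> ch x" for x by (simp add: ch_def abs_if add_increasing)
  have bb: "\<bar>b i j\<bar> \<le> 1" if "i < n" "j < m" for i j
    using assms(8)[OF that] s0 by (simp add: b_def s_def abs_div)
  have th0: "0 \<le> th" using Mx0 l1 n0 by (simp add: th_def)
  have th2: "th\<^sup>2 = l / (real n * Mx\<^sup>2)" using l1 n0 Mx0
    by (simp add: th_def power_divide real_sqrt_pow2)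
  have th32: "th \<le> 3/2"
  proof -
    have "sqrt (l / real n) \<le> 1" using ln l1 by simp
    hence "th \<le> 1 / Mx" using Mx0 by (simp add: th_def divide_right_mono)
    also have "\<dots> \<le> 3/2" using Mx23 Mx0 by (simp add: field_simps)
    finally show ?thesis .
  qed
  have sqR: "sqrt R / Mx = c * sqrt (real n / l)"
  proof -
    have "R = (c * Mx)\<^sup>2 * (real n / l)" by (simp add: R_def N_def power_mult_distrib)
    hence "sqrt R = sqrt ((c * Mx)\<^sup>2) * sqrt (real n / l)" by (simp only: real_sqrt_mult)
    hence "sqrt R = c * Mx * sqrt (real n / l)" using c68 Mx0 by simp
    thus ?thesis using Mx0 by simp
  qed

  define Ev where "Ev = (\<lambda>i k. {\<omega> \<in> space M. exp (sqrt R / Mx) / 2 \<le> (\<Prod>k'\<in>{k}. ch ((1/Mx) * W i k' \<omega>))})"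
  define Fv where "Fv = (\<lambda>i. {\<omega> \<in> space M. exp (c * l / 2) \<le> (\<Prod>k\<in>{..<n}. ch (th * W i k \<omega>))})"
  have intA: "integrable M (\<lambda>\<omega>. \<Prod>k'\<in>{k}. ch ((1/Mx) * W i k' \<omega>))"
    and bndA: "(\<integral>\<omega>. (\<Prod>k'\<in>{k}. ch ((1/Mx) * W i k' \<omega>)) \<partial>M) \<le> exp (\<sigma>\<^sup>2 * (exp (1/Mx) - 1 - 1/Mx)) ^ (card {k} * m)"
    if "i < n" "k < n" for i k
    using cosh_prod[OF P ind sp ez, of "{k}" "b i" "1/Mx"] that bb Mx0 unfolding ch_def W_def by auto
  have intB: "integrable M (\<lambda>\<omega>. \<Prod>k\<in>{..<n}. ch (th * W i k \<omega>))"
    and bndB: "(\<integral>\<omega>. (\<Prod>k\<in>{..<n}. ch (th * W i k \<omega>)) \<partial>M) \<le> exp (\<sigma>\<^sup>2 * (exp th - 1 - th)) ^ (card {..<n} * m)"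
    if "i < n" for i
    using cosh_prod[OF P ind sp ez, of "{..<n}" "b i" th] that bb th0 unfolding ch_def W_def by auto
  have measA: "Ev i k \<in> sets M" if "i < n" "k < n" for i k
  proof -
    have "(\<lambda>\<omega>. \<Prod>k'\<in>{k}. ch ((1/Mx) * W i k' \<omega>)) \<in> borel_measurable M"
      using intA[OF that] by (rule borel_measurable_integrable)
    thus ?thesis unfolding Ev_def by measurable
  qed
  have measB: "Fv i \<in> sets M" if "i < n" for i
  proof -
    have "(\<lambda>\<omega>. \<Prod>k\<in>{..<n}. ch (th * W i k \<omega>)) \<in> borel_measurable M"
      using intB[OF that] by (rule borel_measurable_integrable)
    thus ?thesis unfolding Fv_def by measurable
  qed
  have PA: "measure M (Ev i k) \<le> 2 * exp 3 * exp (- (c * sqrt (real n / l)))" if "i < n" "k < n" for i k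
  proof -
    have "measure M (Ev i k) \<le> (\<integral>\<omega>. (\<Prod>k'\<in>{k}. ch ((1/Mx) * W i k' \<omega>)) \<partial>M) / (exp (sqrt R / Mx) / 2)"
      unfolding Ev_def
      by (rule integral_Markov_inequality_measure[OF intA[OF that], of "space M"]) (auto intro: less_imp_le[OF ch_pos])
    also have "\<dots> \<le> exp 3 / (exp (sqrt R / Mx) / 2)"
    proof (rule divide_right_mono[OF _ ])
      have "exp (\<sigma>\<^sup>2 * (exp (1/Mx) - 1 - 1/Mx)) ^ (card {k} * m) = exp (real m * s * (exp (1/Mx) - 1 - 1/Mx))"
        by (simp add: s_def exp_of_nat_mult[symmetric] mult.assoc)
      also have "\<dots> \<le> exp 3"
      proof -
        have phi0: "0 \<le> exp (1/Mx) - 1 - 1/Mx" using exp_ge_add_one_self[of "1/Mx"] by linarith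
        have "real m * s * (exp (1/Mx) - 1 - 1/Mx) \<le> Mx\<^sup>2 * ((1/Mx)\<^sup>2 * exp (1/Mx) / 2)"
          using msM phi0 phi_le_sq[of "1/Mx"] Mx0 by (intro mult_mono) auto
        also have "\<dots> = exp (1/Mx) / 2" using Mx0 by (simp add: power_divide)
        also have "\<dots> \<le> exp (3/2) / 2" using Mx23 Mx0 by (simp add: field_simps)
        also have "\<dots> \<le> 3" using exp32 by simp
        finally show ?thesis by simp
      qed
      finally show "(\<integral>\<omega>. (\<Prod>k'\<in>{k}. ch ((1/Mx) * W i k' \<omega>)) \<partial>M) \<le> exp 3"
        using bndA[OF that] by linarith
    qed simp
    also have "\<dots> = 2 * exp 3 * exp (- (c * sqrt (real n / l)))"
      by (simp add: sqR exp_minus field_simps)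
    finally show ?thesis .
  qed
  have PB: "measure M (Fv i) \<le> exp (3 * l - c * l / 2)" if "i < n" for i
  proof -
    have "measure M (Fv i) \<le> (\<integral>\<omega>. (\<Prod>k\<in>{..<n}. ch (th * W i k \<omega>)) \<partial>M) / exp (c * l / 2)"
      unfolding Fv_def
      by (rule integral_Markov_inequality_measure[OF intB[OF that], of "space M"]) (auto intro: less_imp_le[OF ch_pos] prod_nonneg)
    also have "\<dots> \<le> exp (3 * l) / exp (c * l / 2)"
    proof (rule divide_right_mono[OF _ ])
      have "exp (\<sigma>\<^sup>2 * (exp th - 1 - th)) ^ (card {..<n} * m) = exp (real n * (real m * s * (exp th - 1 - th)))"
        by (simp add: s_def exp_of_nat_mult[symmetric] mult.assoc)
      also have "\<dots> \<le> exp (3 * l)"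
      proof -
        have phi0: "0 \<le> exp th - 1 - th" using exp_ge_add_one_self[of th] by linarith
        have "real m * s * (exp th - 1 - th) \<le> Mx\<^sup>2 * (th\<^sup>2 * exp th / 2)"
          using msM phi0 phi_le_sq[OF th0] Mx0 by (intro mult_mono) auto
        also have "\<dots> = l * exp th / (2 * real n)" using Mx0 n0 by (simp add: th2 field_simps)
        also have "\<dots> \<le> l * exp (3/2) / (2 * real n)" using th32 l1 n0 by (intro divide_right_mono mult_left_mono) auto
        also have "\<dots> \<le> l * 6 / (2 * real n)" using exp32 l1 n0 by (intro divide_right_mono mult_left_mono) auto
        finally have "real n * (real m * s * (exp th - 1 - th)) \<le> real n * (l * 6 / (2 * real n))"
          using n0 by (intro mult_left_mono) auto
        also have "\<dots> = 3 * l" using n0 by simp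
        finally show ?thesis by simp
      qed
      finally show "(\<integral>\<omega>. (\<Prod>k\<in>{..<n}. ch (th * W i k \<omega>)) \<partial>M) \<le> exp (3 * l)"
        using bndB[OF that] by linarith
    qed simp
    also have "\<dots> = exp (3 * l - c * l / 2)" by (simp add: exp_diff)
    finally show ?thesis .
  qed
  define E where "E = {\<omega> \<in> space M. frob_ABt n m A (\<lambda>k j. X k j \<omega>)
             \<ge> 34 * (1 + t) * real n * \<sigma>\<^sup>2 * max (sqrt (real m * \<sigma>\<^sup>2)) (2/3)}"
  have Th: "34 * (1 + t) * real n * \<sigma>\<^sup>2 * max (sqrt (real m * \<sigma>\<^sup>2)) (2/3) = c * real n * s * Mx"
    by (simp add: c_def s_def Mx_def)
  have R0: "0 \<le> R" using l1 by (simp add: R_def N_def)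
  have thR: "th\<^sup>2 * R = c\<^sup>2" using l1 n0 Mx0 by (simp add: th2 R_def N_def field_simps)
  have thN: "th\<^sup>2 * N / (2 * c) = c * l / 2"
  proof -
    have "th\<^sup>2 * N / (2 * c) = (l / (real n * Mx\<^sup>2)) * (c\<^sup>2 * real n * Mx\<^sup>2) / (2 * c)" by (simp only: th2 N_def)
    also have "\<dots> = c * l / 2" using l1 n0 Mx0 c68 by (simp add: field_simps power2_eq_square)
    finally show ?thesis .
  qed
  have incl: "E \<subseteq> (\<Union>i<n. Fv i \<union> (\<Union>k<n. Ev i k))"
  proof
    fix \<omega> assume "\<omega> \<in> E"
    hence \<omega>s: "\<omega> \<in> space M" and fr: "c * real n * s * Mx \<le> sqrt (\<Sum>i<n. \<Sum>k<n. (\<Sum>j<m. A i j * X k j \<omega>)\<^sup>2)"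
      unfolding E_def frob_ABt_def Th by auto
    show "\<omega> \<in> (\<Union>i<n. Fv i \<union> (\<Union>k<n. Ev i k))"
    proof (rule ccontr)
      assume nin: "\<omega> \<notin> (\<Union>i<n. Fv i \<union> (\<Union>k<n. Ev i k))"
      have smallW: "(W i k \<omega>)\<^sup>2 \<le> R" if ik: "i < n" "k < n" for i k
      proof -
        have "\<omega> \<notin> Ev i k" using nin ik by auto
        hence "ch ((1/Mx) * W i k \<omega>) < exp (sqrt R / Mx) / 2" using \<omega>s unfolding Ev_def by auto
        hence "exp \<bar>(1/Mx) * W i k \<omega>\<bar> < exp (sqrt R / Mx)" using ch_abs[of "(1/Mx) * W i k \<omega>"] by linarith
        hence "\<bar>W i k \<omega>\<bar> / Mx < sqrt R / Mx" using Mx0 by (simp add: abs_mult)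
        hence "\<bar>W i k \<omega>\<bar> \<le> sqrt R" using Mx0 by (simp add: divide_less_cancel)
        hence "\<bar>W i k \<omega>\<bar>\<^sup>2 \<le> (sqrt R)\<^sup>2" by (intro power_mono) auto
        thus ?thesis using R0 by simp
      qed
      have Zeq: "(\<Sum>j<m. A i j * X k j \<omega>) = s * W i k \<omega>" for i k
        using s0 by (simp add: W_def b_def sum_distrib_left)
      have sumnn: "0 \<le> (\<Sum>i<n. \<Sum>k<n. (\<Sum>j<m. A i j * X k j \<omega>)\<^sup>2)" by (intro sum_nonneg) auto
      have lhs0: "0 \<le> c * real n * s * Mx" using c68 s0 Mx0 by simp
      have "(c * real n * s * Mx)\<^sup>2 \<le> (sqrt (\<Sum>i<n. \<Sum>k<n. (\<Sum>j<m. A i j * X k j \<omega>)\<^sup>2))\<^sup>2"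
        using fr lhs0 by (intro power_mono) auto
      also have "\<dots> = (\<Sum>i<n. \<Sum>k<n. (\<Sum>j<m. A i j * X k j \<omega>)\<^sup>2)" using sumnn by simp
      also have "\<dots> = s\<^sup>2 * (\<Sum>i<n. \<Sum>k<n. (W i k \<omega>)\<^sup>2)"
        by (simp add: Zeq power_mult_distrib sum_distrib_left)
      finally have "s\<^sup>2 * (real n * N) \<le> s\<^sup>2 * (\<Sum>i<n. \<Sum>k<n. (W i k \<omega>)\<^sup>2)"
        by (simp add: N_def power_mult_distrib algebra_simps power2_eq_square)
      hence big: "real n * N \<le> (\<Sum>i<n. \<Sum>k<n. (W i k \<omega>)\<^sup>2)" using s0 by simp
      obtain i where i: "i < n" "N \<le> (\<Sum>k<n. (W i k \<omega>)\<^sup>2)"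
      proof (rule ccontr)
        assume "\<not> thesis"
        hence lt: "\<And>i. i \<in> {..<n} \<Longrightarrow> (\<Sum>k<n. (W i k \<omega>)\<^sup>2) < N" using that by force
        have "(\<Sum>i<n. \<Sum>k<n. (W i k \<omega>)\<^sup>2) < (\<Sum>i<n. N)"
          using assms(2) by (intro sum_strict_mono lt) (auto simp: lessThan_empty_iff)
        thus False using big by simp
      qed
      have "exp (c * l / 2) \<le> (\<Prod>k\<in>{..<n}. ch (th * W i k \<omega>))"
      proof -
        have "exp (c * l / 2) = exp (th\<^sup>2 * N / (2 * c))" by (simp add: thN)
        also have "\<dots> \<le> exp (th\<^sup>2 * (\<Sum>k<n. (W i k \<omega>)\<^sup>2) / (2 * c))"
          using i(2) c68 by (simp add: divide_right_mono mult_left_mono)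
        also have "\<dots> = (\<Prod>k\<in>{..<n}. exp ((th * W i k \<omega>)\<^sup>2 / (2 * c)))"
          by (simp add: exp_sum[symmetric] sum_distrib_left sum_divide_distrib power_mult_distrib)
        also have "\<dots> \<le> (\<Prod>k\<in>{..<n}. ch (th * W i k \<omega>))"
        proof (intro prod_mono conjI)
          fix k assume k: "k \<in> {..<n}"
          have "(th * W i k \<omega>)\<^sup>2 \<le> th\<^sup>2 * R"
            using smallW[OF i(1), of k] k by (simp add: power_mult_distrib mult_left_mono)
          hence "(th * W i k \<omega>)\<^sup>2 \<le> c\<^sup>2" using thR by simp
          hence "\<bar>th * W i k \<omega>\<bar> \<le> \<bar>c\<bar>" by (simp add: abs_le_square_iff)
          hence "\<bar>th * W i k \<omega>\<bar> \<le> c" using c68 by simp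
          thus "exp ((th * W i k \<omega>)\<^sup>2 / (2 * c)) \<le> ch (th * W i k \<omega>)"
            unfolding ch_def using c68 by (intro cosh_lower) auto
        qed auto
        finally show ?thesis .
      qed
      hence "\<omega> \<in> Fv i" using \<omega>s by (simp add: Fv_def)
      thus False using nin i(1) by auto
    qed
  qed
  define a where "a = exp (3 * l - c * l / 2)"
  define bA where "bA = 2 * exp 3 * exp (- (c * sqrt (real n / l)))"
  have sets_i: "Fv i \<union> (\<Union>k<n. Ev i k) \<in> sets M" if "i < n" for i
    using measB[OF that] measA[OF that] by auto
  have "measure M E \<le> measure M (\<Union>i<n. Fv i \<union> (\<Union>k<n. Ev i k))"
    by (rule finite_measure_mono[OF incl]) (use sets_i in auto)
  also have "\<dots> \<le> (\<Sum>i<n. measure M (Fv i \<union> (\<Union>k<n. Ev i k)))"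
    by (rule finite_measure_subadditive_finite) (use sets_i in auto)
  also have "\<dots> \<le> (\<Sum>i<n. a + real n * bA)"
  proof (rule sum_mono)
    fix i assume "i \<in> {..<n}"
    hence i: "i < n" by simp
    have "measure M (Fv i \<union> (\<Union>k<n. Ev i k)) \<le> measure M (Fv i) + measure M (\<Union>k<n. Ev i k)"
      by (rule measure_Un_le) (use measB[OF i] measA[OF i] in auto)
    also have "measure M (\<Union>k<n. Ev i k) \<le> (\<Sum>k<n. measure M (Ev i k))"
      by (rule finite_measure_subadditive_finite) (use measA[OF i] in auto)
    also have "\<dots> \<le> (\<Sum>k<n. bA)" unfolding bA_def by (intro sum_mono PA[OF i]) auto
    finally show "measure M (Fv i \<union> (\<Union>k<n. Ev i k)) \<le> a + real n * bA"
      using PB[OF i] unfolding a_def by simp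
  qed
  also have "\<dots> = real n * (a + real n * bA)" by simp
  also have "\<dots> \<le> real n * exp (- (t * l))"
  proof (rule mult_left_mono)
    have tl: "0 \<le> t * l" using assms(9) l1 by simp
    have ln2: "ln 2 < (1::real)" by (rule ln_2_less_1)
    have "ln 2 + (3 * l - c * l / 2) \<le> - (t * l)"
      using tl ln2 l1 by (simp add: c_def algebra_simps)
    hence "exp (ln 2 + (3 * l - c * l / 2)) \<le> exp (- (t * l))" by simp
    hence a2: "2 * a \<le> exp (- (t * l))" by (simp add: a_def exp_add)
    have q: "(1 + t) * (l + 2) \<le> (1 + t) * (34 * sqrt (real n / l))"
      using lb assms(9) by (intro mult_left_mono) auto
    have "ln 4 = 2 * ln (2::real)" using ln_realpow[of 2 2] by simp
    hence ln4: "ln 4 \<le> (2::real)" using ln2 by simp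
    have nexp: "real n = exp (l - 1)" using n0 by (simp add: l_def)
    have "ln 4 + (l - 1) + 3 - c * sqrt (real n / l) \<le> - (t * l)"
      using q ln4 tl assms(9) by (simp add: c_def algebra_simps)
    hence eb: "exp (ln 4 + (l - 1) + 3 - c * sqrt (real n / l)) \<le> exp (- (t * l))" by simp
    have key: "exp (ln 4 + (l - 1) + 3 - x) = 2 * (real n * (2 * exp 3 * exp (- x)))" for x
    proof -
      have "exp (ln 4 + (l - 1) + 3 - x) = exp (ln 4) * exp (l - 1) * exp 3 * exp (- x)"
        by (simp only: exp_add[symmetric]) (rule arg_cong[where f=exp], simp)
      also have "\<dots> = 2 * (real n * (2 * exp 3 * exp (- x)))" using nexp by simp
      finally show ?thesis .
    qed
    have b2: "2 * (real n * bA) \<le> exp (- (t * l))"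
      unfolding bA_def using eb key[of "c * sqrt (real n / l)"] by linarith
    show "a + real n * bA \<le> exp (- (t * l))" using a2 b2 by simp
  qed simp
  also have "\<dots> = real n / (exp 1 * real n) powr t"
  proof -
    have pw: "(exp 1 * real n) powr t = exp (t * l)" using n0 by (simp add: powr_def ln_mult l_def mult.commute)
    show ?thesis by (simp add: pw exp_minus divide_inverse)
  qed
  finally show ?thesis unfolding E_def .
qed

end
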